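(* Let $p\in(0,1/2)$, let $n\ge k\ge 1$ be integers and let $\delta\in(0,1)$. Consider any variable-length algorithm for computing $\mathsf{TH}_k(\mathbf{x})$ from noisy queries whose number of queries $M$ satisfies \[ \mathbb{E}[M\mid\mathbf{x}]\le\frac{(n-k+1)\log\frac{1}{4\delta}}{D_{\mathsf{KL}}(p\|1-p)} \] for every input instance $\mathbf{x}\in\{0,1\}^n$. Then the worst-case error probability of the algorithm, $\max_{\mathbf{x}\in\{0,1\}^n}\mathbb{P}(\widehat{\mathsf{TH}}_k\neq\mathsf{TH}_k(\mathbf{x})\mid\mathbf{x})$, is at least $\delta$.
   Context: For $\mathbf{x}=(x_1,\dots,x_n)\in\{0,1\}^n$, $\mathsf{TH}_k(\mathbf{x})=1$ if $\sum_i x_i\ge k$ and $0$ otherwise. Noisy query model: at each time step the algorithm chooses an index $i\in[n]$ (possibly depending on all previous responses) and observes $x_i\oplus Z$, where $Z\sim\mathsf{Bern}(p)$ is independent of everything else; $p$ is known. A variable-length algorithm may stop adaptively (so $M$ is random) and then outputs an estimate $\widehat{\mathsf{TH}}_k\in\{0,1\}$. $D_{\mathsf{KL}}(p\|1-p)=(1-2p)\log\frac{1-p}{p}$; $\log$ is the natural logarithm. *)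

theory Defs
  imports "HOL-Probability.Probability"
begin

text \<open>
  A (possibly randomised) variable-length algorithm is given by a random seed
  (distribution R on a type 'r) and, for every seed, a deterministic adaptive strategy
  mapping the list of responses observed so far to an action:
  Inl i  = query index i,   Inr b  = stop and output the estimate b.
\<close>

type_synonym 'r algorithm = "'r \<Rightarrow> bool list \<Rightarrow> nat + bool"

definition TH :: "nat \<Rightarrow> bool list \<Rightarrow> bool" where
  "TH k x \<longleftrightarrow> k \<le> count_list x True"

definition KL_flip :: "real \<Rightarrow> real" where
  "KL_flip p = (1 - 2 * p) * ln ((1 - p) / p)"

text \<open>Probability of observing response r when querying x_i: r = x_i XOR Z, Z ~ Bern p.\<close>
definition obs_prob :: "real \<Rightarrow> bool list \<Rightarrow> nat \<Rightarrow> bool \<Rightarrow> real" where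
  "obs_prob p x i r = (if r = x ! i then 1 - p else p)"

text \<open>Probability (for a fixed seed strategy S) that the first length rs responses are rs
  (zero if the strategy stopped before producing them).\<close>
definition path_prob :: "real \<Rightarrow> bool list \<Rightarrow> (bool list \<Rightarrow> nat + bool) \<Rightarrow> bool list \<Rightarrow> real" where
  "path_prob p x S rs =
     (\<Prod>j<length rs. (case S (take j rs) of Inl i \<Rightarrow> obs_prob p x i (rs ! j) | Inr _ \<Rightarrow> 0))"

text \<open>E[M | x] for a fixed seed: sum over t of P(M > t).\<close>
definition exp_queries_det :: "real \<Rightarrow> bool list \<Rightarrow> (bool list \<Rightarrow> nat + bool) \<Rightarrow> ennreal" where
  "exp_queries_det p x S =
     (\<Sum>\<^sub>\<infinity> rs. ennreal (if isl (S rs) then path_prob p x S rs else 0))"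

definition err_prob_det :: "real \<Rightarrow> nat \<Rightarrow> bool list \<Rightarrow> (bool list \<Rightarrow> nat + bool) \<Rightarrow> ennreal" where
  "err_prob_det p k x S =
     (\<Sum>\<^sub>\<infinity> rs. ennreal (if S rs = Inr (\<not> TH k x) then path_prob p x S rs else 0))"

definition exp_queries :: "real \<Rightarrow> bool list \<Rightarrow> 'r algorithm \<Rightarrow> 'r pmf \<Rightarrow> ennreal" where
  "exp_queries p x A R = (\<integral>\<^sup>+ \<omega>. exp_queries_det p x (A \<omega>) \<partial>measure_pmf R)"

definition err_prob :: "real \<Rightarrow> nat \<Rightarrow> bool list \<Rightarrow> 'r algorithm \<Rightarrow> 'r pmf \<Rightarrow> ennreal" where
  "err_prob p k x A R = (\<integral>\<^sup>+ \<omega>. err_prob_det p k x (A \<omega>) \<partial>measure_pmf R)"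

end

theory Submission
  imports Defs
begin

definition lev :: "nat \<Rightarrow> (bool list \<Rightarrow> real) \<Rightarrow> real" where
  "lev t g = (\<Sum>rs\<in>{rs::bool list. length rs = t}. g rs)"

lemma finite_len: "finite {rs::bool list. length rs = t}"
  using finite_lists_length_eq[of "UNIV::bool set" t] by simp

lemma lev_Suc: "lev (Suc t) g = lev t (\<lambda>rs. g (rs @ [True]) + g (rs @ [False]))"
proof -
  let ?L = "{rs::bool list. length rs = t}"
  have eq: "{rs::bool list. length rs = Suc t} = (\<lambda>rs. rs @ [True]) ` ?L \<union> (\<lambda>rs. rs @ [False]) ` ?L"
  proof (rule set_eqI, rule iffI)
    fix rs :: "bool list" assume "rs \<in> {rs. length rs = Suc t}"
    then have l: "length rs = Suc t" by simp
    then have "rs \<noteq> []" by auto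
    then have "rs = butlast rs @ [last rs]" by simp
    moreover have "length (butlast rs) = t" using l by simp
    ultimately show "rs \<in> (\<lambda>rs. rs @ [True]) ` ?L \<union> (\<lambda>rs. rs @ [False]) ` ?L"
      by (cases "last rs") (metis (mono_tags) UnI1 UnI2 image_eqI mem_Collect_eq)+
  qed auto
  have "lev (Suc t) g = sum g ((\<lambda>rs. rs @ [True]) ` ?L) + sum g ((\<lambda>rs. rs @ [False]) ` ?L)"
    unfolding lev_def eq by (rule sum.union_disjoint) (auto simp: finite_len)
  also have "\<dots> = lev t (\<lambda>rs. g (rs @ [True])) + lev t (\<lambda>rs. g (rs @ [False]))"
    unfolding lev_def by (subst sum.reindex; auto simp: inj_on_def)+
  also have "\<dots> = lev t (\<lambda>rs. g (rs @ [True]) + g (rs @ [False]))"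
    unfolding lev_def by (simp add: sum.distrib)
  finally show ?thesis .
qed

lemma lev_0: "lev 0 g = g []"
  unfolding lev_def by simp

lemma path_prob_snoc:
  "path_prob p x S (rs @ [b]) = path_prob p x S rs *
     (case S rs of Inl i \<Rightarrow> obs_prob p x i b | Inr _ \<Rightarrow> 0)"
proof -
  have "path_prob p x S (rs @ [b]) =
     (\<Prod>j<length rs. (case S (take j (rs@[b])) of Inl i \<Rightarrow> obs_prob p x i ((rs@[b]) ! j) | Inr _ \<Rightarrow> 0))
     * (case S rs of Inl i \<Rightarrow> obs_prob p x i b | Inr _ \<Rightarrow> 0)"
    unfolding path_prob_def by (simp add: prod.lessThan_Suc nth_append cong: sum.case_cong)
  also have "(\<Prod>j<length rs. (case S (take j (rs@[b])) of Inl i \<Rightarrow> obs_prob p x i ((rs@[b]) ! j) | Inr _ \<Rightarrow> 0))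
      = path_prob p x S rs"
    unfolding path_prob_def by (rule prod.cong) (auto simp: nth_append cong: sum.case_cong)
  finally show ?thesis .
qed

lemma path_prob_Nil: "path_prob p x S [] = 1"
  unfolding path_prob_def by simp

definition lam :: "(bool list \<Rightarrow> nat + bool) \<Rightarrow> nat \<Rightarrow> real \<Rightarrow> bool list \<Rightarrow> real" where
  "lam S j L rs = (\<Sum>t<length rs. (case S (take t rs) of Inl i \<Rightarrow> if i = j then (if rs ! t then L else - L) else 0 | Inr _ \<Rightarrow> 0))"

lemma lam_snoc:
  "lam S j L (rs @ [b]) = lam S j L rs +
     (case S rs of Inl i \<Rightarrow> if i = j then (if b then L else - L) else 0 | Inr _ \<Rightarrow> 0)"
proof -
  have "lam S j L (rs @ [b]) =
     (\<Sum>t<length rs. (case S (take t (rs@[b])) of Inl i \<Rightarrow> if i = j then (if (rs@[b]) ! t then L else - L) else 0 | Inr _ \<Rightarrow> 0))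
     + (case S rs of Inl i \<Rightarrow> if i = j then (if b then L else - L) else 0 | Inr _ \<Rightarrow> 0)"
    unfolding lam_def by (simp add: sum.lessThan_Suc)
  also have "(\<Sum>t<length rs. (case S (take t (rs@[b])) of Inl i \<Rightarrow> if i = j then (if (rs@[b]) ! t then L else - L) else 0 | Inr _ \<Rightarrow> 0))
     = lam S j L rs"
    unfolding lam_def by (rule sum.cong) (auto simp: nth_append)
  finally show ?thesis .
qed

lemma lam_Nil: "lam S j L [] = 0" unfolding lam_def by simp

definition Lsum :: "(bool list \<Rightarrow> nat + bool) \<Rightarrow> nat \<Rightarrow> (bool list \<Rightarrow> real) \<Rightarrow> real" where
  "Lsum S T g = (\<Sum>t<T. lev t (\<lambda>rs. if isl (S rs) then 0 else g rs)) + lev T g"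

lemma Lsum_Suc:
  assumes "\<And>rs b. \<not> isl (S rs) \<Longrightarrow> g (rs @ [b]) = 0"
  shows "Lsum S (Suc T) g = Lsum S T g +
           lev T (\<lambda>rs. if isl (S rs) then g (rs @ [True]) + g (rs @ [False]) - g rs else 0)"
proof -
  have "lev T (\<lambda>rs. if isl (S rs) then 0 else g rs) + lev T (\<lambda>rs. g (rs @ [True]) + g (rs @ [False]))
      = lev T g + lev T (\<lambda>rs. if isl (S rs) then g (rs @ [True]) + g (rs @ [False]) - g rs else 0)"
    unfolding lev_def sum.distrib[symmetric] by (rule sum.cong) (auto simp: assms)
  then show ?thesis unfolding Lsum_def by (simp add: lev_Suc)
qed

lemma Lsum_lin: "Lsum S T (\<lambda>rs. a * g rs + b * h rs) = a * Lsum S T g + b * Lsum S T h"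
proof -
  have "lev t (\<lambda>rs. if isl (S rs) then 0 else a * g rs + b * h rs) =
        a * lev t (\<lambda>rs. if isl (S rs) then 0 else g rs) + b * lev t (\<lambda>rs. if isl (S rs) then 0 else h rs)" for t
    unfolding lev_def sum_distrib_left sum.distrib[symmetric] by (rule sum.cong) auto
  moreover have "lev T (\<lambda>rs. a * g rs + b * h rs) = a * lev T g + b * lev T h"
    unfolding lev_def sum_distrib_left sum.distrib[symmetric] by simp
  ultimately show ?thesis unfolding Lsum_def by (simp add: sum.distrib sum_distrib_left algebra_simps)
qed

lemma Lsum_mono: "(\<And>rs. g rs \<le> h rs) \<Longrightarrow> Lsum S T g \<le> Lsum S T h"
  unfolding Lsum_def lev_def by (intro add_mono sum_mono) auto

lemma obs_sum: "obs_prob p y i True + obs_prob p y i False = 1"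
  unfolding obs_prob_def by auto

lemma obs_nonneg: "0 \<le> p \<Longrightarrow> p \<le> 1 \<Longrightarrow> 0 \<le> obs_prob p y i b"
  unfolding obs_prob_def by auto

lemma path_prob_nonneg: "0 \<le> p \<Longrightarrow> p \<le> 1 \<Longrightarrow> 0 \<le> path_prob p y S rs"
  unfolding path_prob_def by (intro prod_nonneg) (auto split: sum.split simp: obs_nonneg)

lemma path_prob_Inr: "\<not> isl (S rs) \<Longrightarrow> path_prob p y S (rs @ [b]) = 0"
  by (cases "S rs") (auto simp: path_prob_snoc)

lemma Lsum_prob: "Lsum S T (path_prob p y S) = 1"
proof (induction T)
  case 0
  then show ?case by (simp add: Lsum_def lev_0 path_prob_Nil)
next
  case (Suc T)
  have "lev T (\<lambda>rs. if isl (S rs) then path_prob p y S (rs @ [True]) + path_prob p y S (rs @ [False]) - path_prob p y S rs else 0) = 0"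
    unfolding lev_def
  proof (intro sum.neutral ballI)
    fix rs :: "bool list"
    show "(if isl (S rs) then path_prob p y S (rs @ [True]) + path_prob p y S (rs @ [False]) - path_prob p y S rs else 0) = 0"
    proof (cases "S rs")
      case (Inl i)
      have "path_prob p y S rs * obs_prob p y i True + path_prob p y S rs * obs_prob p y i False
            = path_prob p y S rs * (obs_prob p y i True + obs_prob p y i False)" by (simp add: algebra_simps)
      then show ?thesis using Inl by (simp add: path_prob_snoc obs_sum)
    qed simp
  qed
  then show ?case using Suc by (simp add: Lsum_Suc path_prob_Inr)
qed


lemma am_gm_pt:
  fixes P u w :: real
  assumes "0 \<le> P" "0 < u" "0 < w"
  shows "P * u \<le> w/2 * min P (P*u^2) + 1/(2*w) * max P (P*u^2)"
proof (cases "u \<le> 1")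
  case True
  then have "u^2 \<le> 1" using assms by (simp add: power_le_one)
  then have mm: "min P (P*u^2) = P*u^2" "max P (P*u^2) = P"
    using assms mult_left_mono[of "u^2" 1 P] by auto
  have h: "0 \<le> P*(w*u-1)^2" using assms by simp
  have eq: "w/2 * (P*u^2) + 1/(2*w) * P - P*u = P*(w*u-1)^2/(2*w)"
    using assms by (simp add: field_simps power2_eq_square)
  have "0 \<le> P*(w*u-1)^2/(2*w)" using h assms by simp
  then show ?thesis unfolding mm using eq by linarith
next
  case False
  then have "1 \<le> u^2" using assms by (simp add: one_le_power)
  then have mm: "min P (P*u^2) = P" "max P (P*u^2) = P*u^2"
    using assms mult_left_mono[of 1 "u^2" P] by auto
  have h: "0 \<le> P*(w-u)^2" using assms by simp
  have eq: "w/2 * P + 1/(2*w) * (P*u^2) - P*u = P*(w-u)^2/(2*w)"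
    using assms by (simp add: field_simps power2_eq_square)
  have "0 \<le> P*(w-u)^2/(2*w)" using h assms by simp
  then show ?thesis unfolding mm using eq by linarith
qed


lemma fin_lt: "finite {rs::bool list. length rs < T}"
  by (rule finite_subset[OF _ finite_lists_length_le[of "UNIV::bool set" T]]) auto

lemma sum_lev_lt: "(\<Sum>t<T. lev t g) = (\<Sum>rs\<in>{rs::bool list. length rs < T}. g rs)"
proof (induction T)
  case 0 show ?case by simp
next
  case (Suc T)
  have eq: "{rs::bool list. length rs < Suc T} = {rs. length rs < T} \<union> {rs. length rs = T}" by auto
  have "(\<Sum>t<Suc T. lev t g) = (\<Sum>t<T. lev t g) + lev T g" by simp
  also have "\<dots> = (\<Sum>rs\<in>{rs::bool list. length rs < T}. g rs) + (\<Sum>rs\<in>{rs::bool list. length rs = T}. g rs)"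
    using Suc.IH by (simp add: lev_def)
  also have "\<dots> = (\<Sum>rs\<in>{rs::bool list. length rs < Suc T}. g rs)"
    unfolding eq by (rule sum.union_disjoint[symmetric]) (auto simp: fin_lt finite_len)
  finally show ?case .
qed

lemma fin_le_tsum:
  assumes "finite F" "\<And>rs. 0 \<le> g rs"
  shows "ennreal (\<Sum>rs\<in>F. g rs) \<le> (\<Sum>\<^sub>\<infinity> rs. ennreal (g rs))"
proof -
  have "ennreal (sum g F) = (\<Sum>rs\<in>F. ennreal (g rs))" using assms by simp
  also have "\<dots> = (\<Sum>\<^sub>\<infinity> rs\<in>F. ennreal (g rs))" using assms by simp
  also have "\<dots> \<le> (\<Sum>\<^sub>\<infinity> rs. ennreal (g rs))"
    by (rule infsum_mono_neutral) (auto intro: nonneg_summable_on_complete)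
  finally show ?thesis .
qed

definition mj :: "real \<Rightarrow> bool list \<Rightarrow> (bool list \<Rightarrow> nat + bool) \<Rightarrow> nat \<Rightarrow> ennreal" where
  "mj p x S j = (\<Sum>\<^sub>\<infinity> rs. ennreal (if S rs = Inl j then path_prob p x S rs else 0))"

context
  fixes p :: real and x x' :: "bool list" and j :: nat and S :: "bool list \<Rightarrow> nat + bool"
  assumes p0: "0 < p" and p1: "p < 1/2"
    and diff: "\<And>i. i \<noteq> j \<Longrightarrow> x' ! i = x ! i" and xj: "x ! j = False" and x'j: "x' ! j = True"
begin

abbreviation "LL \<equiv> ln ((1-p)/p)"

lemma QP: "path_prob p x' S rs = path_prob p x S rs * exp (lam S j LL rs)"
proof (induction rs rule: rev_induct)
  case Nil show ?case by (simp add: path_prob_Nil lam_Nil)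
next
  case (snoc b rs)
  have step: "(case S rs of Inl i \<Rightarrow> obs_prob p x' i b | Inr _ \<Rightarrow> 0) =
     (case S rs of Inl i \<Rightarrow> obs_prob p x i b | Inr _ \<Rightarrow> 0) *
     exp (case S rs of Inl i \<Rightarrow> if i = j then (if b then LL else - LL) else 0 | Inr _ \<Rightarrow> 0)"
  proof (cases "S rs")
    case (Inl i)
    show ?thesis
    proof (cases "i = j")
      case True
      have e1: "exp LL = (1-p)/p" using p0 p1 by simp
      have e2: "exp (- LL) = p/(1-p)" using p0 p1 by (simp add: exp_minus)
      have pne: "p \<noteq> 0" "1 - p \<noteq> 0" "p \<noteq> 1" using p0 p1 by auto
      show ?thesis
      proof (cases b)
        case True
        then show ?thesis using Inl \<open>i = j\<close> xj x'j by (simp add: obs_prob_def e1 pne)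
      next
        case False
        then show ?thesis using Inl \<open>i = j\<close> xj x'j by (simp add: obs_prob_def e2 pne)
      qed
    next
      case False then show ?thesis using Inl diff by (simp add: obs_prob_def)
    qed
  qed simp
  show ?case by (simp add: path_prob_snoc lam_snoc snoc.IH step exp_add mult_ac)
qed

lemma Wald: "Lsum S T (\<lambda>rs. path_prob p x S rs * lam S j LL rs) =
   - KL_flip p * (\<Sum>t<T. lev t (\<lambda>rs. if S rs = Inl j then path_prob p x S rs else 0))"
proof (induction T)
  case 0
  then show ?case by (simp add: Lsum_def lev_0 lam_Nil)
next
  case (Suc T)
  have pt: "(if isl (S rs) then path_prob p x S (rs @ [True]) * lam S j LL (rs @ [True])
      + path_prob p x S (rs @ [False]) * lam S j LL (rs @ [False])
      - path_prob p x S rs * lam S j LL rs else 0)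
     = - KL_flip p * (if S rs = Inl j then path_prob p x S rs else 0)" for rs
  proof (cases "S rs")
    case (Inl i)
    show ?thesis
    proof (cases "i = j")
      case True
      have o1: "obs_prob p x j True = p" and o2: "obs_prob p x j False = 1 - p"
        using xj by (simp_all add: obs_prob_def)
      have e: "path_prob p x S (rs @ [True]) = path_prob p x S rs * p"
        "path_prob p x S (rs @ [False]) = path_prob p x S rs * (1 - p)"
        "lam S j LL (rs @ [True]) = lam S j LL rs + LL"
        "lam S j LL (rs @ [False]) = lam S j LL rs - LL"
        using Inl True o1 o2 by (simp_all add: path_prob_snoc lam_snoc)
      have ar: "a*p*(l+L) + a*(1-p)*(l-L) - a*l = -((1-2*p)*L)*a" for a l L :: real
        by (simp add: algebra_simps)
      show ?thesis unfolding e KL_flip_def using Inl True ar by simp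
    next
      case False
      have "obs_prob p x i True + obs_prob p x i False = 1" by (rule obs_sum)
      then have "path_prob p x S rs * obs_prob p x i True * lam S j LL rs +
          path_prob p x S rs * obs_prob p x i False * lam S j LL rs - path_prob p x S rs * lam S j LL rs = 0"
      proof -
        have "path_prob p x S rs * obs_prob p x i True * lam S j LL rs +
          path_prob p x S rs * obs_prob p x i False * lam S j LL rs - path_prob p x S rs * lam S j LL rs
          = path_prob p x S rs * lam S j LL rs * (obs_prob p x i True + obs_prob p x i False - 1)"
          by (simp add: algebra_simps)
        then show ?thesis using \<open>obs_prob p x i True + obs_prob p x i False = 1\<close> by simp
      qed
      then show ?thesis using Inl False
        by (simp add: path_prob_snoc lam_snoc)
    qed
  qed simp
  have "Lsum S (Suc T) (\<lambda>rs. path_prob p x S rs * lam S j LL rs) =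
     Lsum S T (\<lambda>rs. path_prob p x S rs * lam S j LL rs) +
     lev T (\<lambda>rs. - KL_flip p * (if S rs = Inl j then path_prob p x S rs else 0))"
  proof -
    have "Lsum S (Suc T) (\<lambda>rs. path_prob p x S rs * lam S j LL rs) =
     Lsum S T (\<lambda>rs. path_prob p x S rs * lam S j LL rs) +
     lev T (\<lambda>rs. if isl (S rs) then path_prob p x S (rs @ [True]) * lam S j LL (rs @ [True])
      + path_prob p x S (rs @ [False]) * lam S j LL (rs @ [False])
      - path_prob p x S rs * lam S j LL rs else 0)"
      by (rule Lsum_Suc) (simp add: path_prob_Inr)
    also have "lev T (\<lambda>rs. if isl (S rs) then path_prob p x S (rs @ [True]) * lam S j LL (rs @ [True])
      + path_prob p x S (rs @ [False]) * lam S j LL (rs @ [False])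
      - path_prob p x S rs * lam S j LL rs else 0) =
      lev T (\<lambda>rs. - KL_flip p * (if S rs = Inl j then path_prob p x S rs else 0))"
      unfolding lev_def by (intro sum.cong refl pt)
    finally show ?thesis .
  qed
  also have "lev T (\<lambda>rs. - KL_flip p * (if S rs = Inl j then path_prob p x S rs else 0))
      = - KL_flip p * lev T (\<lambda>rs. if S rs = Inl j then path_prob p x S rs else 0)"
    unfolding lev_def by (simp add: sum_distrib_left)
  finally show ?case using Suc by (simp add: distrib_left)
qed

lemma Pnn: "0 \<le> path_prob p y S rs"
  using p0 p1 by (intro path_prob_nonneg) auto

lemma jensen: "exp (Lsum S T (\<lambda>rs. path_prob p x S rs * lam S j LL rs) / 2)
    \<le> Lsum S T (\<lambda>rs. path_prob p x S rs * exp (lam S j LL rs / 2))"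
proof -
  define c where "c = Lsum S T (\<lambda>rs. path_prob p x S rs * lam S j LL rs) / 2"
  have pt: "(exp c * (1 - c)) * path_prob p x S rs + (exp c / 2) * (path_prob p x S rs * lam S j LL rs)
      \<le> path_prob p x S rs * exp (lam S j LL rs / 2)" for rs
  proof -
    have "exp c * (1 + (lam S j LL rs / 2 - c)) \<le> exp c * exp (lam S j LL rs / 2 - c)"
      by (intro mult_left_mono exp_ge_add_one_self) auto
    also have "\<dots> = exp (lam S j LL rs / 2)" by (simp add: exp_diff)
    finally have "path_prob p x S rs * (exp c * (1 + (lam S j LL rs / 2 - c))) \<le> path_prob p x S rs * exp (lam S j LL rs / 2)"
      by (intro mult_left_mono Pnn)
    then show ?thesis by (simp add: algebra_simps)
  qed
  have "Lsum S T (\<lambda>rs. (exp c * (1 - c)) * path_prob p x S rs + (exp c / 2) * (path_prob p x S rs * lam S j LL rs))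
     = exp c * (1 - c) * Lsum S T (path_prob p x S) + exp c / 2 * Lsum S T (\<lambda>rs. path_prob p x S rs * lam S j LL rs)"
    by (rule Lsum_lin)
  also have "\<dots> = exp c * (1 - c) + exp c / 2 * (2 * c)" by (simp add: Lsum_prob c_def)
  also have "\<dots> = exp c" by (simp add: algebra_simps)
  finally have E1: "Lsum S T (\<lambda>rs. (exp c * (1 - c)) * path_prob p x S rs + (exp c / 2) * (path_prob p x S rs * lam S j LL rs))
     = exp c" .
  have "exp c \<le> Lsum S T (\<lambda>rs. path_prob p x S rs * exp (lam S j LL rs / 2))"
  proof -
    have "Lsum S T (\<lambda>rs. (exp c * (1 - c)) * path_prob p x S rs + (exp c / 2) * (path_prob p x S rs * lam S j LL rs))
      \<le> Lsum S T (\<lambda>rs. path_prob p x S rs * exp (lam S j LL rs / 2))"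
      by (rule Lsum_mono) (rule pt)
    then show ?thesis using E1 by linarith
  qed
  then show ?thesis by (simp only: c_def)
qed

lemma bh: "exp (- KL_flip p * (\<Sum>t<T. lev t (\<lambda>rs. if S rs = Inl j then path_prob p x S rs else 0))) / 2
    \<le> Lsum S T (\<lambda>rs. min (path_prob p x S rs) (path_prob p x' S rs))"
proof -
  define c where "c = - KL_flip p * (\<Sum>t<T. lev t (\<lambda>rs. if S rs = Inl j then path_prob p x S rs else 0)) / 2"
  define C where "C = Lsum S T (\<lambda>rs. path_prob p x S rs * exp (lam S j LL rs / 2))"
  define A where "A = Lsum S T (\<lambda>rs. min (path_prob p x S rs) (path_prob p x' S rs))"
  define B where "B = Lsum S T (\<lambda>rs. max (path_prob p x S rs) (path_prob p x' S rs))"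
  have Cge: "exp c \<le> C" using jensen unfolding C_def c_def Wald by simp
  then have Cpos: "0 < C" by (meson exp_gt_zero less_le_trans)
  define w where "w = 2 / C"
  have spos: "0 < w" using Cpos by (simp add: w_def)
  have Q2: "path_prob p x' S rs = path_prob p x S rs * (exp (lam S j LL rs / 2))^2" for rs
    by (simp add: QP power2_eq_square exp_add[symmetric])
  have pt: "path_prob p x S rs * exp (lam S j LL rs / 2) \<le>
      w/2 * min (path_prob p x S rs) (path_prob p x' S rs) + 1/(2*w) * max (path_prob p x S rs) (path_prob p x' S rs)" for rs
    unfolding Q2 by (rule am_gm_pt[OF Pnn exp_gt_zero spos])
  have "C \<le> w/2 * A + 1/(2*w) * B"
    using Lsum_mono[OF pt, of S T] unfolding C_def A_def B_def Lsum_lin .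
  moreover have "B \<le> 2"
  proof -
    have "B \<le> Lsum S T (\<lambda>rs. 1 * path_prob p x S rs + 1 * path_prob p x' S rs)"
      unfolding B_def by (rule Lsum_mono) (simp add: Pnn max_def)
    also have "\<dots> = 2" by (simp only: Lsum_lin Lsum_prob; simp)
    finally show ?thesis .
  qed
  ultimately have h1: "C \<le> A / C + C / 4 * B"
    using Cpos spos by (simp add: w_def)
  have "C / 4 * B \<le> C / 4 * 2" using \<open>B \<le> 2\<close> Cpos by (intro mult_left_mono) auto
  then have "C \<le> A / C + C / 2" using h1 by linarith
  then have "C * C \<le> (A / C + C / 2) * C" using Cpos by (intro mult_right_mono) auto
  also have "\<dots> = A + C * C / 2" using Cpos by (simp add: field_simps)
  finally have "C * C / 2 \<le> A" by linarith
  moreover have "exp c * exp c \<le> C * C" using Cge Cpos by (intro mult_mono) auto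
  moreover have "exp c * exp c = exp (- KL_flip p * (\<Sum>t<T. lev t (\<lambda>rs. if S rs = Inl j then path_prob p x S rs else 0)))"
    by (simp add: c_def exp_add[symmetric])
  ultimately show ?thesis unfolding A_def by linarith
qed


lemma KL_pos: "0 < KL_flip p"
proof -
  have "1 < (1-p)/p" using p0 p1 by (simp add: field_simps)
  then have "0 < ln ((1-p)/p)" by simp
  then show ?thesis unfolding KL_flip_def using p1 by simp
qed

lemma child_sum: "path_prob p x S (rs @ [True]) + path_prob p x S (rs @ [False]) =
   (if isl (S rs) then path_prob p x S rs else 0)"
  by (cases "S rs") (auto simp: path_prob_snoc obs_sum simp flip: distrib_left)

lemma per_seed:
  assumes th: "\<not> TH k x" "TH k x'" and fin: "exp_queries_det p x S \<noteq> \<top>"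
  shows "ennreal (exp (- KL_flip p * enn2real (mj p x S j)) / 2) \<le> err_prob_det p k x S + err_prob_det p k x' S"
proof -
  define E where "E = enn2real (exp_queries_det p x S)"
  have Eeq: "exp_queries_det p x S = ennreal E" using fin by (simp add: E_def less_top)
  have mj_le: "mj p x S j \<le> exp_queries_det p x S"
    unfolding mj_def exp_queries_det_def
    by (rule infsum_mono) (auto intro!: nonneg_summable_on_complete simp: Pnn)
  define mr where "mr = enn2real (mj p x S j)"
  have "mj p x S j < top" using le_less_trans[OF mj_le] Eeq by simp
  then have mjeq: "mj p x S j = ennreal mr" unfolding mr_def by simp
  have partE: "(\<Sum>t<T. lev t (\<lambda>rs. if isl (S rs) then path_prob p x S rs else 0)) \<le> E" for T
  proof -
    have "ennreal (\<Sum>t<T. lev t (\<lambda>rs. if isl (S rs) then path_prob p x S rs else 0)) \<le> exp_queries_det p x S"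
      unfolding sum_lev_lt exp_queries_det_def by (rule fin_le_tsum) (auto simp: fin_lt Pnn)
    moreover have "0 \<le> E" by (simp add: E_def)
    ultimately show ?thesis unfolding Eeq by simp
  qed
  have partM: "(\<Sum>t<T. lev t (\<lambda>rs. if S rs = Inl j then path_prob p x S rs else 0)) \<le> mr" for T
  proof -
    have "ennreal (\<Sum>t<T. lev t (\<lambda>rs. if S rs = Inl j then path_prob p x S rs else 0)) \<le> mj p x S j"
      unfolding sum_lev_lt mj_def by (rule fin_le_tsum) (auto simp: fin_lt Pnn)
    moreover have "0 \<le> mr" by (simp add: mr_def)
    ultimately show ?thesis unfolding mjeq by simp
  qed
  have tail: "\<exists>t. lev t (\<lambda>rs. if isl (S rs) then path_prob p x S rs else 0) \<le> e" if "0 < e" for e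
  proof (rule ccontr)
    assume "\<not> ?thesis"
    then have a: "e \<le> lev t (\<lambda>rs. if isl (S rs) then path_prob p x S rs else 0)" for t by (metis linorder_le_cases)
    define T where "T = nat \<lceil>E / e\<rceil> + 1"
    have "of_nat (card {..<T}) * e \<le> (\<Sum>t<T. lev t (\<lambda>rs. if isl (S rs) then path_prob p x S rs else 0))"
      by (rule sum_bounded_below) (rule a)
    then have "real T * e \<le> E" using partE[of T] by simp
    moreover have "E / e < real T" unfolding T_def by linarith
    then have "E < real T * e" using that by (simp add: field_simps)
    ultimately show False by simp
  qed
  show ?thesis
  proof (rule ennreal_le_epsilon)
    fix e :: real assume "0 < e"
    obtain t where t: "lev t (\<lambda>rs. if isl (S rs) then path_prob p x S rs else 0) \<le> e"
      using tail[OF \<open>0 < e\<close>] by blast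
    define T where "T = Suc t"
    have levT: "lev T (path_prob p x S) \<le> e"
      using t unfolding T_def lev_Suc child_sum .
    define g1 where "g1 rs = (if S rs = Inr True then path_prob p x S rs else 0)" for rs
    define g2 where "g2 rs = (if S rs = Inr False then path_prob p x' S rs else 0)" for rs
    have g1nn: "0 \<le> g1 rs" and g2nn: "0 \<le> g2 rs" for rs
      unfolding g1_def g2_def by (auto simp: Pnn)
    define G1 where "G1 = (\<Sum>rs\<in>{rs::bool list. length rs < T}. g1 rs)"
    define G2 where "G2 = (\<Sum>rs\<in>{rs::bool list. length rs < T}. g2 rs)"
    have "Lsum S T (\<lambda>rs. min (path_prob p x S rs) (path_prob p x' S rs))
        \<le> (\<Sum>t<T. lev t (\<lambda>rs. g1 rs + g2 rs)) + lev T (path_prob p x S)"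
      unfolding Lsum_def lev_def
    proof (intro add_mono sum_mono)
      fix t rs
      show "(if isl (S rs) then 0 else min (path_prob p x S rs) (path_prob p x' S rs)) \<le> g1 rs + g2 rs"
      proof (cases "S rs")
        case (Inl i) then show ?thesis using g1nn g2nn by simp
      next
        case (Inr b) then show ?thesis unfolding g1_def g2_def by (cases b) auto
      qed
      show "min (path_prob p x S rs) (path_prob p x' S rs) \<le> path_prob p x S rs" by simp
    qed
    also have "(\<Sum>t<T. lev t (\<lambda>rs. g1 rs + g2 rs)) = G1 + G2"
      unfolding sum_lev_lt G1_def G2_def by (simp add: sum.distrib)
    finally have A: "Lsum S T (\<lambda>rs. min (path_prob p x S rs) (path_prob p x' S rs)) \<le> G1 + G2 + e"
      using levT by linarith
    have "exp (- KL_flip p * mr) / 2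
        \<le> exp (- KL_flip p * (\<Sum>t<T. lev t (\<lambda>rs. if S rs = Inl j then path_prob p x S rs else 0))) / 2"
      using partM[of T] KL_pos by (simp add: mult_left_mono)
    also have "\<dots> \<le> Lsum S T (\<lambda>rs. min (path_prob p x S rs) (path_prob p x' S rs))" by (rule bh)
    finally have R: "exp (- KL_flip p * mr) / 2 \<le> G1 + G2 + e" using A by linarith
    have G1nn: "0 \<le> G1" and G2nn: "0 \<le> G2" unfolding G1_def G2_def by (auto intro!: sum_nonneg g1nn g2nn)
    have e1: "ennreal G1 \<le> err_prob_det p k x S"
    proof -
      have "ennreal G1 \<le> (\<Sum>\<^sub>\<infinity> rs. ennreal (g1 rs))"
        unfolding G1_def by (rule fin_le_tsum[OF fin_lt g1nn])
      also have "\<dots> = err_prob_det p k x S" unfolding err_prob_det_def g1_def using th by simp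
      finally show ?thesis .
    qed
    have e2: "ennreal G2 \<le> err_prob_det p k x' S"
    proof -
      have "ennreal G2 \<le> (\<Sum>\<^sub>\<infinity> rs. ennreal (g2 rs))"
        unfolding G2_def by (rule fin_le_tsum[OF fin_lt g2nn])
      also have "\<dots> = err_prob_det p k x' S" unfolding err_prob_det_def g2_def using th by simp
      finally show ?thesis .
    qed
    have "ennreal (exp (- KL_flip p * mr) / 2) \<le> ennreal (G1 + G2 + e)"
      using R by (rule ennreal_leI)
    also have "\<dots> = ennreal G1 + ennreal G2 + ennreal e"
      using G1nn G2nn \<open>0 < e\<close> by simp
    also have "\<dots> \<le> err_prob_det p k x S + err_prob_det p k x' S + ennreal e"
      using e1 e2 by (intro add_mono) auto
    finally show "ennreal (exp (- KL_flip p * enn2real (mj p x S j)) / 2) \<le> err_prob_det p k x S + err_prob_det p k x' S + ennreal e"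
      by (simp add: mr_def)
  qed
qed

end


lemma count_rep: "count_list (replicate m a) b = (if a = b then m else 0)"
  by (induction m) auto

lemma count_upd:
  assumes "j < length xs" "xs ! j = False"
  shows "count_list (xs[j := True]) True = Suc (count_list xs True)"
proof -
  have c1: "count_list xs True = count_list (take j xs @ xs ! j # drop (Suc j) xs) True"
    using arg_cong[where f="\<lambda>l. count_list l True", OF id_take_nth_drop[OF assms(1)]] .
  have c2: "xs[j := True] = take j xs @ True # drop (Suc j) xs"
    using assms(1) by (rule upd_conv_take_nth_drop)
  show ?thesis unfolding c2 using c1 assms(2) by simp
qed

lemma infsum_finsum:
  fixes f :: "'i \<Rightarrow> 'a \<Rightarrow> ennreal"
  shows "finite I \<Longrightarrow> (\<Sum>j\<in>I. \<Sum>\<^sub>\<infinity> rs. f j rs) = (\<Sum>\<^sub>\<infinity> rs. \<Sum>j\<in>I. f j rs)"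
proof (induction I rule: finite_induct)
  case empty then show ?case by simp
next
  case (insert a F)
  have "(\<Sum>\<^sub>\<infinity> rs. f a rs + (\<Sum>j\<in>F. f j rs)) = (\<Sum>\<^sub>\<infinity> rs. f a rs) + (\<Sum>\<^sub>\<infinity> rs. \<Sum>j\<in>F. f j rs)"
    by (rule infsum_add) (auto intro: nonneg_summable_on_complete)
  then show ?case using insert by simp
qed

lemma pmf_fin:
  fixes f :: "'a \<Rightarrow> ennreal"
  assumes "(\<integral>\<^sup>+\<omega>. f \<omega> \<partial>measure_pmf R) \<noteq> \<top>" "\<omega> \<in> set_pmf R"
  shows "f \<omega> \<noteq> \<top>"
proof
  assume inf: "f \<omega> = \<top>"
  have "(\<integral>\<^sup>+y. f y * indicator {\<omega>} y \<partial>measure_pmf R) \<le> (\<integral>\<^sup>+y. f y \<partial>measure_pmf R)"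
    by (intro nn_integral_mono) (simp split: split_indicator)
  moreover have "(\<integral>\<^sup>+y. f y * indicator {\<omega>} y \<partial>measure_pmf R) = \<top>"
    using assms(2) inf by (simp add: emeasure_pmf_single set_pmf_iff ennreal_top_mult)
  ultimately show False using assms(1) by (simp add: top_unique)
qed

lemma mj_le_exp: "mj p x S j \<le> exp_queries_det p x S"
  unfolding mj_def exp_queries_det_def
  by (rule infsum_mono) (auto intro!: nonneg_summable_on_complete)

lemma sum_mj_le: "finite Z \<Longrightarrow> (\<Sum>j\<in>Z. mj p x S j) \<le> exp_queries_det p x S"
proof -
  assume fZ: "finite Z"
  have "(\<Sum>j\<in>Z. mj p x S j) = (\<Sum>\<^sub>\<infinity> rs. \<Sum>j\<in>Z. ennreal (if S rs = Inl j then path_prob p x S rs else 0))"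
    unfolding mj_def using fZ by (rule infsum_finsum)
  also have "\<dots> \<le> exp_queries_det p x S" unfolding exp_queries_det_def
  proof (rule infsum_mono)
    fix rs
    show "(\<Sum>j\<in>Z. ennreal (if S rs = Inl j then path_prob p x S rs else 0)) \<le> ennreal (if isl (S rs) then path_prob p x S rs else 0)"
    proof (cases "S rs")
      case (Inl i)
      have "(\<Sum>j\<in>Z. ennreal (if S rs = Inl j then path_prob p x S rs else 0))
          = (\<Sum>j\<in>Z. if i = j then ennreal (path_prob p x S rs) else 0)"
        using Inl by (intro sum.cong) auto
      also have "\<dots> = (if i \<in> Z then ennreal (path_prob p x S rs) else 0)"
        using fZ by (simp add: sum.delta)
      finally show ?thesis using Inl by simp
    qed simp
  qed (auto intro!: nonneg_summable_on_complete)
  finally show ?thesis .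
qed

theorem proposition5:
  fixes p \<delta> :: real and n k :: nat and A :: "'r algorithm" and R :: "'r pmf"
  assumes "0 < p" "p < 1/2" "1 \<le> k" "k \<le> n" "0 < \<delta>" "\<delta> < 1"
    and "\<forall>\<omega> h i. A \<omega> h = Inl i \<longrightarrow> i < n"
    and "\<forall>x. length x = n \<longrightarrow>
           exp_queries p x A R \<noteq> \<infinity> \<and>
           enn2real (exp_queries p x A R)
             \<le> (real n - real k + 1) * ln (1 / (4 * \<delta>)) / KL_flip p"
  shows "\<exists>x. length x = n \<and> ennreal \<delta> \<le> err_prob p k x A R"
proof -
  have p0: "0 < p" and p1: "p < 1/2" using assms by auto
  define D where "D = KL_flip p"
  have Dpos: "0 < D"
  proof -
    have "1 < (1-p)/p" using p0 p1 by (simp add: field_simps)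
    then have "0 < ln ((1-p)/p)" by simp
    then show ?thesis unfolding D_def KL_flip_def using p1 by simp
  qed
  define x where "x = replicate (k-1) True @ replicate (n-(k-1)) False"
  define Z where "Z = {k-1..<n}"
  have lenx: "length x = n" using assms(3,4) by (simp add: x_def)
  have cx: "count_list x True = k - 1" by (simp add: x_def count_rep)
  have thx: "\<not> TH k x" using cx assms(3) by (simp add: TH_def)
  have xZ: "x ! j = False" if "j \<in> Z" for j
  proof -
    have "k - 1 \<le> j" "j - (k-1) < n - (k-1)" using that assms(3,4) by (auto simp: Z_def)
    then show ?thesis unfolding x_def by (simp add: nth_append)
  qed
  have fZ: "finite Z" by (simp add: Z_def)
  have cardZ: "real (card Z) = real n - real k + 1" using assms(3,4) by (simp add: Z_def of_nat_diff)
  have Zne: "Z \<noteq> {}" using assms(3,4) by (simp add: Z_def)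
  define m where "m j \<omega> = mj p x (A \<omega>) j" for j \<omega>
  define MJ where "MJ j = (\<integral>\<^sup>+\<omega>. m j \<omega> \<partial>measure_pmf R)" for j
  have sumMJ: "(\<Sum>j\<in>Z. MJ j) \<le> exp_queries p x A R"
  proof -
    have "(\<Sum>j\<in>Z. MJ j) = (\<integral>\<^sup>+\<omega>. (\<Sum>j\<in>Z. m j \<omega>) \<partial>measure_pmf R)"
      unfolding MJ_def by (rule nn_integral_sum[symmetric]) simp
    also have "\<dots> \<le> exp_queries p x A R"
      unfolding exp_queries_def m_def by (intro nn_integral_mono sum_mj_le fZ)
    finally show ?thesis .
  qed
  obtain j where jZ: "j \<in> Z" and jmin: "\<And>i. i \<in> Z \<Longrightarrow> MJ j \<le> MJ i"
  proof -
    have "Min (MJ ` Z) \<in> MJ ` Z" using fZ Zne by (intro Min_in) auto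
    then obtain j where "j \<in> Z" "MJ j = Min (MJ ` Z)" by auto
    moreover have "Min (MJ ` Z) \<le> MJ i" if "i \<in> Z" for i using fZ that by (intro Min_le) auto
    ultimately show ?thesis using that by metis
  qed
  have NJ: "of_nat (card Z) * MJ j \<le> exp_queries p x A R"
    using sum_bounded_below[of Z "MJ j" MJ] jmin sumMJ by (meson order_trans)
  have EQfin: "exp_queries p x A R \<noteq> \<top>"
    and EQle: "enn2real (exp_queries p x A R) \<le> (real n - real k + 1) * ln (1 / (4 * \<delta>)) / KL_flip p"
    using assms(8) lenx by auto
  have cZpos: "0 < card Z" using fZ Zne by (simp add: card_gt_0_iff)
  have MJfin: "MJ j \<noteq> \<top>"
  proof
    assume "MJ j = \<top>"
    then have "of_nat (card Z) * MJ j = \<top>" using cZpos by (simp add: ennreal_mult_top)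
    then show False using NJ EQfin by (simp add: top_unique)
  qed
  define c where "c = enn2real (MJ j)"
  have cnn: "0 \<le> c" by (simp add: c_def)
  have MJeq: "MJ j = ennreal c" using MJfin unfolding c_def by (simp add: less_top)
  have "ennreal (real (card Z) * c) \<le> ennreal (enn2real (exp_queries p x A R))"
    using NJ EQfin cnn unfolding MJeq by (simp add: ennreal_of_nat_eq_real_of_nat ennreal_mult less_top)
  then have "real (card Z) * c \<le> enn2real (exp_queries p x A R)" by (simp add: ennreal_le_iff)
  then have hN: "real (card Z) * c \<le> real (card Z) * (ln (1 / (4 * \<delta>)) / D)"
    using EQle cardZ by (simp add: D_def)
  have "c \<le> ln (1 / (4 * \<delta>)) / D" using mult_left_le_imp_le[OF hN] cZpos by simp
  then have Dc: "D * c \<le> ln (1 / (4 * \<delta>))" using Dpos by (simp add: field_simps)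
  have exp4: "4 * \<delta> \<le> exp (- D * c)"
  proof -
    have "- ln (1 / (4 * \<delta>)) = ln (4 * \<delta>)" using assms(5) by (simp add: ln_div)
    then have "exp (- ln (1 / (4 * \<delta>))) = 4 * \<delta>" using assms(5) by simp
    moreover have "exp (- ln (1 / (4 * \<delta>))) \<le> exp (- D * c)" using Dc by simp
    ultimately show ?thesis by simp
  qed
  have jn: "j < n" using jZ by (simp add: Z_def)
  define x' where "x' = x[j := True]"
  have lenx': "length x' = n" using lenx by (simp add: x'_def)
  have diff: "\<And>i. i \<noteq> j \<Longrightarrow> x' ! i = x ! i" by (simp add: x'_def)
  have xj: "x ! j = False" using xZ[OF jZ] .
  have x'j: "x' ! j = True" using jn lenx by (simp add: x'_def)
  have thx': "TH k x'" using count_upd[of j x] jn lenx xj cx assms(3) by (simp add: TH_def x'_def)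
  have fin_w: "exp_queries_det p x (A \<omega>) \<noteq> \<top>" if "\<omega> \<in> set_pmf R" for \<omega>
    using pmf_fin[OF _ that] EQfin unfolding exp_queries_def by blast
  define f where "f \<omega> = enn2real (m j \<omega>)" for \<omega>
  have fnn: "0 \<le> f \<omega>" for \<omega> by (simp add: f_def)
  have ps: "ennreal (exp (- D * f \<omega>) / 2) \<le> err_prob_det p k x (A \<omega>) + err_prob_det p k x' (A \<omega>)"
    if "\<omega> \<in> set_pmf R" for \<omega>
    using per_seed[OF p0 p1 diff xj x'j thx thx' fin_w[OF that]] unfolding f_def m_def D_def .
  have mfin: "m j \<omega> = ennreal (f \<omega>)" if "\<omega> \<in> set_pmf R" for \<omega>
  proof -
    have "m j \<omega> < \<top>" using le_less_trans[OF mj_le_exp] fin_w[OF that] unfolding m_def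
      by (simp add: less_top)
    then show ?thesis unfolding f_def by simp
  qed
  have intf: "(\<integral>\<^sup>+\<omega>. ennreal (f \<omega>) \<partial>measure_pmf R) = ennreal c"
  proof -
    have "(\<integral>\<^sup>+\<omega>. ennreal (f \<omega>) \<partial>measure_pmf R) = MJ j"
      unfolding MJ_def by (intro nn_integral_cong_AE) (simp add: AE_measure_pmf_iff mfin)
    then show ?thesis using MJeq by simp
  qed
  define K where "K = exp (- D * c) * D / 2"
  have Knn: "0 \<le> K" using Dpos by (simp add: K_def)
  have tang: "ennreal (exp (- D * c) / 2) + ennreal (K * c)
     \<le> ennreal (exp (- D * f \<omega>) / 2) + ennreal K * ennreal (f \<omega>)" for \<omega>
  proof -
    have "exp (- D * c) * (1 + (D * c - D * f \<omega>)) \<le> exp (- D * c) * exp (D * c - D * f \<omega>)"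
      by (intro mult_left_mono exp_ge_add_one_self) auto
    also have "\<dots> = exp (- D * f \<omega>)" by (simp add: exp_add[symmetric])
    finally have r: "exp (- D * c) / 2 + K * c \<le> exp (- D * f \<omega>) / 2 + K * f \<omega>"
      unfolding K_def by (simp add: algebra_simps)
    have "ennreal (exp (- D * c) / 2) + ennreal (K * c) = ennreal (exp (- D * c) / 2 + K * c)"
      using Knn cnn by simp
    also have "\<dots> \<le> ennreal (exp (- D * f \<omega>) / 2 + K * f \<omega>)" using r by (rule ennreal_leI)
    also have "\<dots> = ennreal (exp (- D * f \<omega>) / 2) + ennreal K * ennreal (f \<omega>)"
      using Knn fnn by (simp add: ennreal_mult)
    finally show ?thesis .
  qed
  define I where "I = (\<integral>\<^sup>+\<omega>. ennreal (exp (- D * f \<omega>) / 2) \<partial>measure_pmf R)"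
  have "ennreal (exp (- D * c) / 2) + ennreal (K * c)
      = (\<integral>\<^sup>+\<omega>. ennreal (exp (- D * c) / 2) + ennreal (K * c) \<partial>measure_pmf R)"
    by (simp add: measure_pmf.emeasure_space_1)
  also have "\<dots> \<le> (\<integral>\<^sup>+\<omega>. ennreal (exp (- D * f \<omega>) / 2) + ennreal K * ennreal (f \<omega>) \<partial>measure_pmf R)"
    by (intro nn_integral_mono tang)
  also have "\<dots> = I + ennreal K * ennreal c"
    unfolding I_def by (simp add: nn_integral_add nn_integral_cmult intf)
  also have "\<dots> = ennreal (K * c) + I" using Knn cnn by (simp add: ennreal_mult add.commute)
  finally have "ennreal (K * c) + ennreal (exp (- D * c) / 2) \<le> ennreal (K * c) + I"
    by (simp add: add.commute)
  then have lowI: "ennreal (exp (- D * c) / 2) \<le> I" by (simp add: ennreal_add_left_cancel_le)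
  have "I \<le> (\<integral>\<^sup>+\<omega>. err_prob_det p k x (A \<omega>) + err_prob_det p k x' (A \<omega>) \<partial>measure_pmf R)"
    unfolding I_def by (intro nn_integral_mono_AE, unfold AE_measure_pmf_iff) (use ps in blast)
  also have "\<dots> = err_prob p k x A R + err_prob p k x' A R"
    unfolding err_prob_def by (simp add: nn_integral_add)
  finally have Ile: "I \<le> err_prob p k x A R + err_prob p k x' A R" .
  have "ennreal (\<delta> + \<delta>) \<le> ennreal (exp (- D * c) / 2)" using exp4 by (intro ennreal_leI) simp
  then have tot: "ennreal (\<delta> + \<delta>) \<le> err_prob p k x A R + err_prob p k x' A R"
    using lowI Ile by (meson order_trans)
  show ?thesis
  proof (rule ccontr)
    assume "\<not> ?thesis"
    then have "err_prob p k x A R < ennreal \<delta>" "err_prob p k x' A R < ennreal \<delta>"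
      using lenx lenx' by (auto simp: not_le)
    then have "err_prob p k x A R + err_prob p k x' A R < ennreal (\<delta> + \<delta>)" by (rule add_mono_ennreal)
    then show False using tot by simp
  qed
qed

end
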